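(* Let $d\ge 2$ be an integer, let $\mu\in\mathbb{R}$ and $\sigma>0$, and let ${\bm{x}}=(x_1,\dots,x_d)\in\mathbb{R}^{d}$ be a random vector whose entries are drawn i.i.d. from $\mathcal{N}(\mu,\sigma^{2})$. For an integer $k$ with $1\le k\le d-1$, define $$\theta({\bm{x}},k)=\mathrm{mean}({\bm{x}})+\mathrm{std}({\bm{x}})\cdot Q\!\left(1-\tfrac{k}{d}\right),$$ where $\mathrm{mean}({\bm{x}})=\frac1d\sum_{i=1}^d x_i$, $\mathrm{std}({\bm{x}})=\sqrt{\frac{1}{d-1}\sum_{i=1}^d (x_i-\mathrm{mean}({\bm{x}}))^2}$, and $Q$ is the quantile function (inverse of the cumulative distribution function) of the standard Gaussian distribution. Take any $\delta\in(0,1)$ and assume $d\ge\max\{2,\log\frac{6}{\delta}\}$. Then with probability at least $1-\delta$, $$\frac{\left|\,\#\{i\in\{1,\dots,d\} : x_i>\theta({\bm{x}},k)\}-k\,\right|}{d}\le 4\sqrt{\frac{\log\frac{6}{\delta}}{d}}\left(1+\sqrt{-2\log\min\left\{\frac{k}{d},\,1-\frac{k}{d}\right\}}\right).$$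
   Context: $\log$ denotes the natural logarithm and $\#$ denotes the cardinality of a finite set. *)

theory Defs
  imports "HOL-Probability.Probability"
begin

definition gauss_measure :: "real \<Rightarrow> real \<Rightarrow> real measure" where
  "gauss_measure \<mu> \<sigma> = density lborel (normal_density \<mu> \<sigma>)"

definition std_gauss_quantile :: "real \<Rightarrow> real" where
  "std_gauss_quantile p = (THE t. cdf (gauss_measure 0 1) t = p)"

definition vec_mean :: "nat \<Rightarrow> (nat \<Rightarrow> real) \<Rightarrow> real" where
  "vec_mean d x = (\<Sum>i=1..d. x i) / real d"

definition vec_std :: "nat \<Rightarrow> (nat \<Rightarrow> real) \<Rightarrow> real" where
  "vec_std d x = sqrt ((\<Sum>i=1..d. (x i - vec_mean d x)\<^sup>2) / (real d - 1))"

definition theta :: "nat \<Rightarrow> (nat \<Rightarrow> real) \<Rightarrow> nat \<Rightarrow> real" where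
  "theta d x k = vec_mean d x + vec_std d x * std_gauss_quantile (1 - real k / real d)"

end

theory Submission
  imports Defs
begin



lemma gauss_prob: "0 < s \<Longrightarrow> prob_space (gauss_measure m s)"
  unfolding gauss_measure_def by (rule prob_space_normal_density) 

lemma sets_gauss[simp, measurable_cong]: "sets (gauss_measure m s) = sets borel"
  unfolding gauss_measure_def by simp

lemma space_gauss[simp]: "space (gauss_measure m s) = UNIV"
  unfolding gauss_measure_def by simp

lemma nn_integral_gauss:
  assumes [measurable]: "g \<in> borel_measurable borel"
  shows "(\<integral>\<^sup>+x. g x \<partial>gauss_measure m s) = (\<integral>\<^sup>+x. ennreal (normal_density m s x) * g x \<partial>lborel)"
  unfolding gauss_measure_def by (subst nn_integral_density) auto

lemma nd_affine: "0 < s \<Longrightarrow> s * normal_density m s (m + s * y) = normal_density 0 1 y"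
  unfolding normal_density_def by (simp add: power_mult_distrib real_sqrt_mult field_simps)

lemma gauss_transfer:
  assumes [measurable]: "g \<in> borel_measurable borel" and s: "0 < s"
  shows "(\<integral>\<^sup>+x. g x \<partial>gauss_measure m s) = (\<integral>\<^sup>+y. g (m + s * y) \<partial>gauss_measure 0 1)"
proof -
  have "(\<integral>\<^sup>+x. g x \<partial>gauss_measure m s) = (\<integral>\<^sup>+x. ennreal (normal_density m s x) * g x \<partial>lborel)"
    by (rule nn_integral_gauss) simp
  also have "\<dots> = ennreal \<bar>s\<bar> * (\<integral>\<^sup>+y. ennreal (normal_density m s (m + s * y)) * g (m + s * y) \<partial>lborel)"
    by (rule nn_integral_real_affine) (use s in auto)
  also have "\<dots> = (\<integral>\<^sup>+y. ennreal \<bar>s\<bar> * (ennreal (normal_density m s (m + s * y)) * g (m + s * y)) \<partial>lborel)"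
    by (rule nn_integral_cmult[symmetric]) simp
  also have "\<dots> = (\<integral>\<^sup>+y. ennreal (normal_density 0 1 y) * g (m + s * y) \<partial>lborel)"
    apply (rule nn_integral_cong)
    using s nd_affine[OF s, of m]
    by (simp add: mult.assoc[symmetric] ennreal_mult'[symmetric])
  also have "\<dots> = (\<integral>\<^sup>+y. g (m + s * y) \<partial>gauss_measure 0 1)"
    by (rule nn_integral_gauss[symmetric]) simp
  finally show ?thesis .
qed

lemma nn_integral_nd: "0 < s \<Longrightarrow> (\<integral>\<^sup>+x. ennreal (normal_density m s x) \<partial>lborel) = 1"
  using prob_space.emeasure_space_1[OF gauss_prob[of s m]]
  by (simp add: gauss_measure_def emeasure_density)

lemma mgf_lin: "(\<integral>\<^sup>+y. ennreal (exp (l * y)) \<partial>gauss_measure 0 1) = ennreal (exp (l\<^sup>2 / 2))"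
proof -
  have eq: "normal_density 0 1 y * exp (l * y) = exp (l\<^sup>2 / 2) * normal_density l 1 y" for y
  proof -
    have "l * y + - (y - 0)\<^sup>2 / (2 * 1\<^sup>2) = l\<^sup>2 / 2 + (- (y - l)\<^sup>2 / (2 * 1\<^sup>2))"
      by (simp add: power2_eq_square field_simps)
    then have "exp (- (y - 0)\<^sup>2 / (2 * 1\<^sup>2)) * exp (l * y) = exp (l\<^sup>2 / 2) * exp (- (y - l)\<^sup>2 / (2 * 1\<^sup>2))"
      by (metis exp_add mult.commute)
    then show ?thesis unfolding normal_density_def by simp
  qed
  have "(\<integral>\<^sup>+y. ennreal (exp (l * y)) \<partial>gauss_measure 0 1)
      = (\<integral>\<^sup>+y. ennreal (exp (l\<^sup>2 / 2)) * ennreal (normal_density l 1 y) \<partial>lborel)"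
    by (subst nn_integral_gauss) (auto simp: ennreal_mult'[symmetric] eq intro!: nn_integral_cong)
  also have "\<dots> = ennreal (exp (l\<^sup>2 / 2))"
    by (subst nn_integral_cmult) (auto simp: nn_integral_nd)
  finally show ?thesis .
qed

lemma mgf_sq:
  assumes l: "l < 1/2"
  shows "(\<integral>\<^sup>+y. ennreal (exp (l * y\<^sup>2)) \<partial>gauss_measure 0 1) = ennreal (1 / sqrt (1 - 2 * l))"
proof -
  define t where "t = 1 / sqrt (1 - 2 * l)"
  have t: "t > 0" "t\<^sup>2 = 1 / (1 - 2 * l)" using l by (auto simp: t_def power_divide)
  have eq: "normal_density 0 1 y * exp (l * y\<^sup>2) = t * normal_density 0 t y" for y
  proof -
    have "t * normal_density 0 t y = t / sqrt (2 * pi * t\<^sup>2) * exp (- y\<^sup>2 / (2 * t\<^sup>2))"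
      unfolding normal_density_def by simp
    also have "t / sqrt (2 * pi * t\<^sup>2) = 1 / sqrt (2 * pi)"
      using t(1) by (simp add: real_sqrt_mult)
    also have "- y\<^sup>2 / (2 * t\<^sup>2) = - y\<^sup>2 / 2 + l * y\<^sup>2"
    proof -
      have "1 / t\<^sup>2 = 1 - 2 * l" using t(2) l by simp
      have "- y\<^sup>2 / (2 * t\<^sup>2) = - (y\<^sup>2 / 2) * (1 / t\<^sup>2)" by simp
      also have "\<dots> = - (y\<^sup>2 / 2) * (1 - 2 * l)" by (simp only: \<open>1 / t\<^sup>2 = 1 - 2 * l\<close>)
      also have "\<dots> = - y\<^sup>2 / 2 + l * y\<^sup>2" by (simp add: field_simps)
      finally show ?thesis .
    qed
    finally show ?thesis
      unfolding normal_density_def by (simp add: mult_exp_exp)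
  qed
  have "(\<integral>\<^sup>+y. ennreal (exp (l * y\<^sup>2)) \<partial>gauss_measure 0 1)
      = (\<integral>\<^sup>+y. ennreal t * ennreal (normal_density 0 t y) \<partial>lborel)"
    by (subst nn_integral_gauss) (use t in \<open>auto simp: ennreal_mult'[symmetric] eq intro!: nn_integral_cong\<close>)
  also have "\<dots> = ennreal t"
    by (subst nn_integral_cmult) (use t in \<open>auto simp: nn_integral_nd\<close>)
  finally show ?thesis unfolding t_def .
qed




abbreviation "N01 \<equiv> gauss_measure 0 1"

lemma N01_prob: "prob_space N01" by (rule gauss_prob) simp

lemma N01_rd: "real_distribution N01"
  using N01_prob by (auto simp: real_distribution_def real_distribution_axioms_def)

interpretation N: real_distribution N01 by (rule N01_rd)

lemma nd_le_half: "normal_density 0 1 x \<le> 1/2"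
proof -
  have "exp (- x\<^sup>2 / 2) \<le> 1" by simp
  moreover have "1 / sqrt (2 * pi) \<le> 1/2"
  proof -
    have "(2::real) \<le> sqrt (2 * pi)"
      using pi_gt3 by (simp add: real_le_rsqrt)
    then show ?thesis by (simp add: field_simps)
  qed
  ultimately have "1 / sqrt (2 * pi) * exp (- x\<^sup>2 / 2) \<le> 1/2 * 1"
    by (intro mult_mono) auto
  then show ?thesis unfolding std_normal_density_def by simp
qed

lemma emeasure_N01_le:
  assumes [measurable]: "A \<in> sets borel"
  shows "emeasure N01 A \<le> ennreal (1/2) * emeasure lborel A"
proof -
  have "emeasure N01 A = (\<integral>\<^sup>+x. indicator A x \<partial>N01)"
    by (simp add: nn_integral_indicator)
  also have "\<dots> = (\<integral>\<^sup>+x. ennreal (normal_density 0 1 x) * indicator A x \<partial>lborel)"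
    by (rule nn_integral_gauss) simp
  also have "\<dots> \<le> (\<integral>\<^sup>+x. ennreal (1/2) * indicator A x \<partial>lborel)"
    by (intro nn_integral_mono mult_right_mono[OF ennreal_leI[OF nd_le_half]]) simp
  also have "\<dots> = ennreal (1/2) * emeasure lborel A"
    by (simp add: nn_integral_cmult_indicator)
  finally show ?thesis .
qed

lemma measure_N01_Ioc: 
  assumes "u \<le> v" shows "measure N01 {u<..v} \<le> (v - u) / 2"
proof -
  have "emeasure N01 {u<..v} \<le> ennreal (1/2) * ennreal (v - u)"
    using emeasure_N01_le[of "{u<..v}"] assms by simp
  also have "\<dots> = ennreal ((v - u)/2)" using ennreal_mult[of "1/2" "v-u"] assms by simp
  finally show ?thesis
    using N.emeasure_eq_measure assms by (simp add: ennreal_le_iff)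
qed

lemma measure_N01_Ioc_pos:
  assumes "u < v" shows "measure N01 {u<..v} > 0"
proof -
  define c where "c = exp (- (u\<^sup>2 + v\<^sup>2) / 2) / sqrt (2 * pi)"
  have c: "c > 0" by (simp add: c_def)
  have le: "c \<le> normal_density 0 1 x" if "x \<in> {u<..v}" for x
  proof -
    have "x\<^sup>2 \<le> u\<^sup>2 + v\<^sup>2"
    proof (cases "x \<ge> 0")
      case True
      then have "x\<^sup>2 \<le> v\<^sup>2" using that by (intro power_mono) auto
      then show ?thesis by (simp add: add_increasing)
    next
      case False
      then have "(-x)\<^sup>2 \<le> (-u)\<^sup>2" using that by (intro power_mono) auto
      then show ?thesis by (simp add: add_increasing2)
    qed
    then have "exp (- (u\<^sup>2 + v\<^sup>2) / 2) \<le> exp (- x\<^sup>2 / 2)" by simp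
    then show ?thesis unfolding c_def std_normal_density_def by (simp add: divide_right_mono)
  qed
  have "ennreal (c * (v - u)) = (\<integral>\<^sup>+x. ennreal c * indicator {u<..v} x \<partial>lborel)"
    using assms c by (simp add: nn_integral_cmult_indicator ennreal_mult')
  also have "\<dots> \<le> (\<integral>\<^sup>+x. ennreal (normal_density 0 1 x) * indicator {u<..v} x \<partial>lborel)"
    by (intro nn_integral_mono) (auto simp: le split: split_indicator)
  also have "\<dots> = (\<integral>\<^sup>+x. indicator {u<..v} x \<partial>N01)"
    by (rule nn_integral_gauss[symmetric]) simp
  also have "\<dots> = emeasure N01 {u<..v}"
    by (simp add: nn_integral_indicator)
  finally have "ennreal (c * (v - u)) \<le> emeasure N01 {u<..v}" .
  then have "c * (v - u) \<le> measure N01 {u<..v} \<or> (c * (v - u) \<le> 0 \<and> measure N01 {u<..v} \<le> 0)"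
    using N.emeasure_eq_measure by (simp add: ennreal_le_iff2)
  then have "c * (v - u) \<le> measure N01 {u<..v}"
    using measure_nonneg[of N01 "{u<..v}"] by linarith
  moreover have "c * (v - u) > 0" using c assms by simp
  ultimately show ?thesis by simp
qed

lemma N01_tail:
  "measure N01 {y. t\<^sup>2 \<le> t * y} \<le> exp (- t\<^sup>2 / 2)"
proof -
  have "emeasure N01 {y. t\<^sup>2 \<le> t * y} = (\<integral>\<^sup>+y. indicator {y. t\<^sup>2 \<le> t * y} y \<partial>N01)"
    by (subst nn_integral_indicator) auto
  also have "\<dots> \<le> (\<integral>\<^sup>+y. ennreal (exp (- t\<^sup>2)) * ennreal (exp (t * y)) \<partial>N01)"
  proof (intro nn_integral_mono)
    fix y
    show "indicator {y. t\<^sup>2 \<le> t * y} y \<le> ennreal (exp (- t\<^sup>2)) * ennreal (exp (t * y))"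
    proof (cases "t\<^sup>2 \<le> t * y")
      case True
      then have "1 \<le> exp (- t\<^sup>2) * exp (t * y)" by (simp add: mult_exp_exp)
      then show ?thesis using True by (simp add: ennreal_mult'[symmetric])
    qed simp
  qed
  also have "\<dots> = ennreal (exp (- t\<^sup>2)) * ennreal (exp (t\<^sup>2 / 2))"
    by (subst nn_integral_cmult) (auto simp: mgf_lin)
  also have "\<dots> = ennreal (exp (- t\<^sup>2 / 2))"
    by (simp add: ennreal_mult'[symmetric] mult_exp_exp)
  finally show ?thesis
    using N.emeasure_eq_measure by (simp add: ennreal_le_iff)
qed



definition Tf :: "real \<Rightarrow> real" where "Tf t = measure N01 {y. t < y}"

lemma cdf_Tf: "cdf N01 t = 1 - Tf t"
proof -
  have "{y. t < y} = space N01 - {..t}" by auto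
  then show ?thesis unfolding Tf_def cdf_def
    using N.prob_compl[of "{..t}"] by simp
qed

lemma Tf_diff: assumes "u < v" shows "Tf u - Tf v = measure N01 {u<..v}"
proof -
  have "cdf N01 v - cdf N01 u = measure N01 {u<..v}" by (rule N.cdf_diff_eq) fact
  then show ?thesis using cdf_Tf[of u] cdf_Tf[of v] by linarith
qed

lemma Tf_lip: assumes "u \<le> v" shows "Tf u - Tf v \<le> (v - u) / 2"
proof (cases "u = v")
  case False
  then have "u < v" using assms by linarith
  then show ?thesis using Tf_diff[of u v] measure_N01_Ioc[of u v] by linarith
qed simp

lemma cdf_strict: "u < v \<Longrightarrow> cdf N01 u < cdf N01 v"
  using Tf_diff[of u v] measure_N01_Ioc_pos[of u v] cdf_Tf[of u] cdf_Tf[of v] by linarith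

lemma cdf_cont: "continuous_on UNIV (cdf N01)"
proof -
  have "isCont (cdf N01) x" for x
  proof -
    have "emeasure N01 {x} \<le> ennreal (1/2) * emeasure lborel {x}"
      by (rule emeasure_N01_le) simp
    moreover have "emeasure lborel {x} = 0" by simp
    ultimately have "emeasure N01 {x} = 0" by simp
    then have "measure N01 {x} = 0" by (simp add: measure_def)
    then show ?thesis using N.isCont_cdf by simp
  qed
  then show ?thesis by (simp add: continuous_on_eq_continuous_at)
qed

lemma quantile_Tf:
  assumes "0 < p" "p < 1"
  shows "Tf (std_gauss_quantile (1 - p)) = p"
proof -
  have "eventually (\<lambda>x. cdf N01 x < 1 - p) at_bot"
    by (rule order_tendstoD(2)[OF N.cdf_lim_at_bot]) (use assms in linarith)
  then obtain a0 where a0: "\<And>x. x \<le> a0 \<Longrightarrow> cdf N01 x < 1 - p"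
    by (auto simp: eventually_at_bot_linorder)
  have a: "cdf N01 a0 < 1 - p" using a0 by simp
  have "eventually (\<lambda>x. cdf N01 x > 1 - p) at_top"
    by (rule order_tendstoD(1)[OF N.cdf_lim_at_top_prob]) (use assms in linarith)
  then obtain b0 where b0: "\<And>x. x \<ge> b0 \<Longrightarrow> cdf N01 x > 1 - p"
    by (auto simp: eventually_at_top_linorder)
  define b where "b = max a0 b0"
  have b: "cdf N01 b > 1 - p" "a0 \<le> b" using b0[of b] unfolding b_def by auto
  obtain t where t: "cdf N01 t = 1 - p"
  proof -
    have "\<exists>x. a0 \<le> x \<and> x \<le> b \<and> cdf N01 x = 1 - p"
      by (rule IVT') (use a b continuous_on_subset[OF cdf_cont] in \<open>auto intro: less_imp_le\<close>)
    then show ?thesis using that by blast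
  qed
  have uniq: "s = t" if "cdf N01 s = 1 - p" for s
  proof (rule ccontr)
    assume "s \<noteq> t"
    then have "s < t \<or> t < s" by linarith
    then show False
    proof
      assume "s < t" then show False using cdf_strict[of s t] t that by linarith
    next
      assume "t < s" then show False using cdf_strict[of t s] t that by linarith
    qed
  qed
  have "std_gauss_quantile (1 - p) = t"
    unfolding std_gauss_quantile_def using t uniq by (rule the_equality)
  moreover have "Tf t = p" using t cdf_Tf[of t] by linarith
  ultimately show ?thesis by simp
qed




lemma chernoff_sum:
  fixes G :: "real measure" and g :: "real \<Rightarrow> real"
  assumes G: "prob_space G" and sG[measurable_cong]: "sets G = sets borel"
    and g[measurable]: "g \<in> borel_measurable borel" and h: "0 \<le> h" and I: "finite I"
    and bound: "(\<integral>\<^sup>+y. ennreal (exp (h * (g y - c))) \<partial>G) \<le> ennreal e" and e: "0 \<le> e"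
  shows "emeasure (PiM I (\<lambda>_. G)) {x\<in>space (PiM I (\<lambda>_. G)). real (card I) * c \<le> (\<Sum>i\<in>I. g (x i))}
           \<le> ennreal (e ^ card I)"
proof -
  let ?M = "PiM I (\<lambda>_. G)"
  let ?S = "{x\<in>space ?M. real (card I) * c \<le> (\<Sum>i\<in>I. g (x i))}"
  interpret P: product_sigma_finite "\<lambda>_. G"
    unfolding product_sigma_finite_def using G prob_space_imp_sigma_finite by blast
  have gG[measurable]: "g \<in> borel_measurable G"
    using g measurable_cong_sets[OF sG refl] by simp
  have S: "?S \<in> sets ?M" by measurable
  have "emeasure ?M ?S = (\<integral>\<^sup>+x. indicator ?S x \<partial>?M)"
    using S by simp
  also have "\<dots> \<le> (\<integral>\<^sup>+x. (\<Prod>i\<in>I. ennreal (exp (h * (g (x i) - c)))) \<partial>?M)"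
  proof (intro nn_integral_mono)
    fix x assume x: "x \<in> space ?M"
    show "indicator ?S x \<le> (\<Prod>i\<in>I. ennreal (exp (h * (g (x i) - c))))"
    proof (cases "x \<in> ?S")
      case True
      have "(\<Prod>i\<in>I. ennreal (exp (h * (g (x i) - c)))) = ennreal (\<Prod>i\<in>I. exp (h * (g (x i) - c)))"
        by (simp add: prod_ennreal)
      also have "(\<Prod>i\<in>I. exp (h * (g (x i) - c))) = exp (\<Sum>i\<in>I. h * (g (x i) - c))"
        by (simp add: exp_sum I)
      also have "(\<Sum>i\<in>I. h * (g (x i) - c)) = h * ((\<Sum>i\<in>I. g (x i)) - real (card I) * c)"
        by (simp add: sum_distrib_left[symmetric] sum_subtractf)
      finally have eq: "(\<Prod>i\<in>I. ennreal (exp (h * (g (x i) - c)))) = ennreal (exp (h * ((\<Sum>i\<in>I. g (x i)) - real (card I) * c)))" .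
      have "0 \<le> h * ((\<Sum>i\<in>I. g (x i)) - real (card I) * c)" using True h by auto
      then have "1 \<le> exp (h * ((\<Sum>i\<in>I. g (x i)) - real (card I) * c))" by simp
      then show ?thesis using True unfolding eq by (simp add: ennreal_leI[of 1, simplified])
    qed simp
  qed
  also have "\<dots> = (\<Prod>i\<in>I. (\<integral>\<^sup>+y. ennreal (exp (h * (g y - c))) \<partial>G))"
    by (rule P.product_nn_integral_prod) (auto simp: I)
  also have "\<dots> = (\<integral>\<^sup>+y. ennreal (exp (h * (g y - c))) \<partial>G) ^ card I"
    by simp
  also have "\<dots> \<le> ennreal e ^ card I"
    by (intro power_mono bound) simp
  also have "\<dots> = ennreal (e ^ card I)"
    using e by (simp add: ennreal_power)
  finally show ?thesis .
qed




lemma G_std: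
  assumes s: "0 < s" and [measurable]: "g \<in> borel_measurable borel"
  shows "(\<integral>\<^sup>+y. ennreal (exp (h * (g ((y - m) / s) - c))) \<partial>gauss_measure m s)
       = (\<integral>\<^sup>+y. ennreal (exp (h * (g y - c))) \<partial>N01)"
  using s by (subst gauss_transfer) auto
lemma B_lin: "(\<integral>\<^sup>+y. ennreal (exp (a * (y - a))) \<partial>N01) = ennreal (exp (- a\<^sup>2 / 2))"
proof -
  have "(\<integral>\<^sup>+y. ennreal (exp (a * (y - a))) \<partial>N01) = (\<integral>\<^sup>+y. ennreal (exp (- a\<^sup>2)) * ennreal (exp (a * y)) \<partial>N01)"
    by (intro nn_integral_cong) (simp add: ennreal_mult'[symmetric] mult_exp_exp algebra_simps power2_eq_square)
  also have "\<dots> = ennreal (exp (- a\<^sup>2)) * ennreal (exp (a\<^sup>2 / 2))"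
    by (subst nn_integral_cmult) (auto simp: mgf_lin)
  also have "\<dots> = ennreal (exp (- a\<^sup>2 / 2))"
    by (simp add: ennreal_mult'[symmetric] mult_exp_exp)
  finally show ?thesis .
qed
lemma B_neg: "(\<integral>\<^sup>+y. ennreal (exp (a * (- y - a))) \<partial>N01) = ennreal (exp (- a\<^sup>2 / 2))"
proof -
  have "(\<integral>\<^sup>+y. ennreal (exp (a * (- y - a))) \<partial>N01) = (\<integral>\<^sup>+y. ennreal (exp (- a\<^sup>2)) * ennreal (exp ((- a) * y)) \<partial>N01)"
    by (intro nn_integral_cong) (simp add: ennreal_mult'[symmetric] mult_exp_exp algebra_simps power2_eq_square)
  also have "\<dots> = ennreal (exp (- a\<^sup>2)) * ennreal (exp ((-a)\<^sup>2 / 2))"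
    by (subst nn_integral_cmult) (auto simp: mgf_lin[of "-a", simplified])
  also have "\<dots> = ennreal (exp (- a\<^sup>2 / 2))"
    by (simp add: ennreal_mult'[symmetric] mult_exp_exp)
  finally show ?thesis .
qed
lemma sqrt_exp2: "sqrt (exp (2 * w)) = exp w"
proof -
  have "exp (2 * w) = (exp w)\<^sup>2" by (metis exp_add mult_2 power2_eq_square)
  then show ?thesis by simp
qed




lemma B_sq:
  assumes r: "0 < r" "r \<le> 1"
  shows "(\<integral>\<^sup>+y. ennreal (exp (r / 4 * (y\<^sup>2 - (1 + 5 * r)))) \<partial>N01) \<le> ennreal (exp (- r\<^sup>2))"
proof -
  define h where "h = r / 4"
  have h: "0 < h" "2 * h \<le> 1/2" using r by (auto simp: h_def)
  have "(\<integral>\<^sup>+y. ennreal (exp (h * (y\<^sup>2 - (1 + 5 * r)))) \<partial>N01)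
      = (\<integral>\<^sup>+y. ennreal (exp (- h * (1 + 5 * r))) * ennreal (exp (h * y\<^sup>2)) \<partial>N01)"
    by (intro nn_integral_cong) (simp add: ennreal_mult'[symmetric] mult_exp_exp algebra_simps)
  also have "\<dots> = ennreal (exp (- h * (1 + 5 * r))) * ennreal (1 / sqrt (1 - 2 * h))"
    using h by (subst nn_integral_cmult) (auto simp: mgf_sq)
  also have "\<dots> = ennreal (exp (- h * (1 + 5 * r)) / sqrt (1 - 2 * h))"
    by (simp add: ennreal_mult'[symmetric])
  also have "\<dots> \<le> ennreal (exp (- r\<^sup>2))"
  proof (rule ennreal_leI)
    have "- (2*h) - 2 * (2*h)\<^sup>2 \<le> ln (1 - 2*h)"
      by (rule ln_one_minus_pos_lower_bound) (use h in auto)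
    then have "exp (2 * (- h - 4 * h\<^sup>2)) \<le> 1 - 2 * h"
      using h by (subst (asm) ln_ge_iff) (auto simp: power2_eq_square algebra_simps)
    then have "exp (- h - 4 * h\<^sup>2) \<le> sqrt (1 - 2 * h)"
      by (metis real_sqrt_le_iff sqrt_exp2)
    moreover have "exp (- h * (1 + 5 * r)) = exp (- r\<^sup>2) * exp (- h - 4 * h\<^sup>2)"
      by (simp add: mult_exp_exp h_def power2_eq_square algebra_simps)
    ultimately show "exp (- h * (1 + 5 * r)) / sqrt (1 - 2 * h) \<le> exp (- r\<^sup>2)"
      using h by (simp add: divide_le_eq mult_left_mono)
  qed
  finally show ?thesis unfolding h_def .
qed




lemma B_nsq:
  assumes r: "0 < r" "r \<le> 1"
  shows "(\<integral>\<^sup>+y. ennreal (exp (r / 2 * (- y\<^sup>2 - (- (1 - 3 * r))))) \<partial>N01) \<le> ennreal (exp (- r\<^sup>2))"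
proof -
  define h where "h = r / 2"
  have h: "0 < h" "2 * h \<le> 1" using r by (auto simp: h_def)
  have "(\<integral>\<^sup>+y. ennreal (exp (h * (- y\<^sup>2 - (- (1 - 3 * r))))) \<partial>N01)
      = (\<integral>\<^sup>+y. ennreal (exp (h * (1 - 3 * r))) * ennreal (exp ((- h) * y\<^sup>2)) \<partial>N01)"
    by (intro nn_integral_cong) (simp add: ennreal_mult'[symmetric] mult_exp_exp algebra_simps)
  also have "\<dots> = ennreal (exp (h * (1 - 3 * r))) * ennreal (1 / sqrt (1 - 2 * (- h)))"
    using h by (subst nn_integral_cmult) (auto simp: mgf_sq[of "-h", simplified])
  also have "\<dots> = ennreal (exp (h * (1 - 3 * r)) / sqrt (1 + 2 * h))"
    by (simp add: ennreal_mult'[symmetric])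
  also have "\<dots> \<le> ennreal (exp (- r\<^sup>2))"
  proof (rule ennreal_leI)
    have "(2*h) - (2*h)\<^sup>2 \<le> ln (1 + 2*h)"
      by (rule ln_one_plus_pos_lower_bound) (use h in auto)
    then have "exp (2 * (h - 2 * h\<^sup>2)) \<le> 1 + 2 * h"
      using h by (subst (asm) ln_ge_iff) (auto simp: power2_eq_square algebra_simps)
    then have "exp (h - 2 * h\<^sup>2) \<le> sqrt (1 + 2 * h)"
      by (metis real_sqrt_le_iff sqrt_exp2)
    moreover have "exp (h * (1 - 3 * r)) = exp (- r\<^sup>2) * exp (h - 2 * h\<^sup>2)"
      by (simp add: mult_exp_exp h_def power2_eq_square algebra_simps)
    ultimately show "exp (h * (1 - 3 * r)) / sqrt (1 + 2 * h) \<le> exp (- r\<^sup>2)"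
      using h by (simp add: divide_le_eq mult_left_mono)
  qed
  finally show ?thesis unfolding h_def .
qed




lemma B_ind:
  fixes G :: "real measure"
  assumes G: "prob_space G" and A: "A \<in> sets G" and b: "0 \<le> b"
  shows "(\<integral>\<^sup>+y. ennreal (exp (4 * b * (indicator A y - (measure G A + b)))) \<partial>G) \<le> ennreal (exp (- 2 * b\<^sup>2))"
proof -
  interpret prob_space G by (rule G)
  define h where "h = 4 * b"
  define P where "P = measure G A"
  define c where "c = P + b"
  have h: "0 \<le> h" using b by (simp add: h_def)
  have P: "0 \<le> P" "P \<le> 1" by (auto simp: P_def)
  have eh: "1 \<le> exp h" using h by simp
  have pt: "ennreal (exp (h * (indicator A y - c)))
     = ennreal (exp (- h * c)) + ennreal (exp (- h * c) * (exp h - 1)) * indicator A y" for y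
  proof (cases "y \<in> A")
    case True
    have "exp (h * (1 - c)) = exp (- h * c) * exp h"
      unfolding mult_exp_exp by (simp add: right_diff_distrib)
    also have "\<dots> = exp (- h * c) + exp (- h * c) * (exp h - 1)"
      by (simp add: right_diff_distrib)
    finally have "exp (h * (1 - c)) = exp (- h * c) + exp (- h * c) * (exp h - 1)" .
    moreover have "0 \<le> exp (- h * c) * (exp h - 1)" using eh by simp
    ultimately show ?thesis using True by (simp del: ennreal_plus add: ennreal_plus[symmetric])
  qed simp
  have "(\<integral>\<^sup>+y. ennreal (exp (h * (indicator A y - c))) \<partial>G)
     = (\<integral>\<^sup>+y. ennreal (exp (- h * c)) + ennreal (exp (- h * c) * (exp h - 1)) * indicator A y \<partial>G)"
    by (intro nn_integral_cong) (rule pt)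
  also have "\<dots> = (\<integral>\<^sup>+y. ennreal (exp (- h * c)) \<partial>G) + (\<integral>\<^sup>+y. ennreal (exp (- h * c) * (exp h - 1)) * indicator A y \<partial>G)"
    by (rule nn_integral_add) (use A in auto)
  also have "\<dots> = ennreal (exp (- h * c)) + ennreal (exp (- h * c) * (exp h - 1)) * ennreal P"
    unfolding P_def using A
    by (simp only: nn_integral_const emeasure_space_1 mult_1_right nn_integral_cmult_indicator emeasure_eq_measure prob_space ennreal_1)
  also have "\<dots> = ennreal (exp (- h * c) + exp (- h * c) * (exp h - 1) * P)"
  proof -
    have n1: "0 \<le> exp (- h * c) * (exp h - 1)" using eh by simp
    have e1: "ennreal (exp (- h * c) * (exp h - 1) * P) = ennreal (exp (- h * c) * (exp h - 1)) * ennreal P"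
      by (rule ennreal_mult) (use n1 P in auto)
    have e2: "ennreal (exp (- h * c) + exp (- h * c) * (exp h - 1) * P) = ennreal (exp (- h * c)) + ennreal (exp (- h * c) * (exp h - 1) * P)"
      by (rule ennreal_plus) (use n1 P in auto)
    show ?thesis unfolding e2 e1 ..
  qed
  also have "\<dots> = ennreal (exp (- h * c) * (1 + P * (exp h - 1)))"
    by (simp add: algebra_simps)
  also have "\<dots> \<le> ennreal (exp (- 2 * b\<^sup>2))"
  proof (rule ennreal_leI)
    have "- h * P + ln (1 + P * (exp h - 1)) \<le> h\<^sup>2 / 8"
      using Hoeffdings_lemma_aux[OF h P(1)] by simp
    then have lnle: "ln (1 + P * (exp h - 1)) \<le> h * P + h\<^sup>2 / 8" by linarith
    have "0 \<le> P * (exp h - 1)" using P eh by (intro mult_nonneg_nonneg) auto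
    then have pos: "0 < 1 + P * (exp h - 1)" by linarith
    have "exp (ln (1 + P * (exp h - 1))) \<le> exp (h * P + h\<^sup>2 / 8)"
      using lnle by simp
    then have "1 + P * (exp h - 1) \<le> exp (h * P + h\<^sup>2 / 8)"
      using exp_ln[OF pos] by simp
    then have "exp (- h * c) * (1 + P * (exp h - 1)) \<le> exp (- h * c) * exp (h * P + h\<^sup>2 / 8)"
      by (intro mult_left_mono) auto
    also have "\<dots> = exp (- 2 * b\<^sup>2)"
      by (simp add: mult_exp_exp h_def c_def power2_eq_square algebra_simps)
    finally show "exp (- h * c) * (1 + P * (exp h - 1)) \<le> exp (- 2 * b\<^sup>2)" .
  qed
  finally show ?thesis unfolding h_def c_def P_def .
qed




lemma G_Tf_gt:
  assumes s: "0 < s"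
  shows "measure (gauss_measure m s) {y. m + s * t < y} = Tf t"
proof -
  have "emeasure (gauss_measure m s) {y. m + s * t < y} = (\<integral>\<^sup>+y. indicator {y. m + s * t < y} y \<partial>gauss_measure m s)"
    by (subst nn_integral_indicator) auto
  also have "\<dots> = (\<integral>\<^sup>+y. indicator {y. m + s * t < y} (m + s * y) \<partial>N01)"
    using s by (subst gauss_transfer) auto
  also have "\<dots> = (\<integral>\<^sup>+y. indicator {y. t < y} y \<partial>N01)"
    using s by (intro nn_integral_cong) (simp split: split_indicator)
  also have "\<dots> = emeasure N01 {y. t < y}"
    by (subst nn_integral_indicator) auto
  finally show ?thesis unfolding Tf_def measure_def by simp
qed
lemma G_Tf_le:
  assumes s: "0 < s"
  shows "measure (gauss_measure m s) {y. y \<le> m + s * t} = 1 - Tf t"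
proof -
  interpret prob_space "gauss_measure m s" by (rule gauss_prob[OF s])
  have "{y. y \<le> m + s * t} = space (gauss_measure m s) - {y. m + s * t < y}" by auto
  then show ?thesis using prob_compl[of "{y. m + s * t < y}"] G_Tf_gt[OF s, of m t] by simp
qed





lemma det_s:
  fixes z :: "nat \<Rightarrow> real" and d :: nat and r :: real
  assumes d: "d \<ge> 2" and r: "0 < r" "r \<le> 1" and dr: "1 / real d \<le> r\<^sup>2"
    and h1: "(\<Sum>i\<in>{1..d}. z i) < real d * (sqrt 2 * r)"
    and h2: "(\<Sum>i\<in>{1..d}. - z i) < real d * (sqrt 2 * r)"
    and h3: "(\<Sum>i\<in>{1..d}. (z i)\<^sup>2) < real d * (1 + 5 * r)"
    and h4: "(\<Sum>i\<in>{1..d}. - (z i)\<^sup>2) < real d * (- (1 - 3 * r))"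
  defines "zb \<equiv> (\<Sum>i\<in>{1..d}. z i) / real d"
  defines "s \<equiv> sqrt ((\<Sum>i\<in>{1..d}. (z i - zb)\<^sup>2) / (real d - 1))"
  shows "\<bar>zb\<bar> \<le> sqrt 2 * r" "\<bar>s - 1\<bar> \<le> 8 * r"
proof -
  define n where "n = real d"
  have n: "n \<ge> 2" using d by (simp add: n_def)
  define Sz where "Sz = (\<Sum>i\<in>{1..d}. z i)"
  define S2 where "S2 = (\<Sum>i\<in>{1..d}. (z i)\<^sup>2)"
  have zb: "zb = Sz / n" by (simp add: zb_def Sz_def n_def)
  have Szn: "Sz = n * zb" using n by (simp add: zb)
  have "Sz < n * (sqrt 2 * r)" "- Sz < n * (sqrt 2 * r)"
    using h1 h2 by (simp_all add: Sz_def n_def sum_negf)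
  then have "\<bar>Sz\<bar> < n * (sqrt 2 * r)" by linarith
  then have "\<bar>Sz\<bar> / n < sqrt 2 * r" using n by (simp add: divide_less_eq mult.commute[of n])
  then have zbl: "\<bar>zb\<bar> < sqrt 2 * r" using n by (simp add: zb)
  then show "\<bar>zb\<bar> \<le> sqrt 2 * r" by simp
  have zb2: "zb\<^sup>2 < 2 * r\<^sup>2"
  proof -
    have "zb\<^sup>2 = \<bar>zb\<bar>\<^sup>2" by simp
    also have "\<dots> < (sqrt 2 * r)\<^sup>2" using zbl by (intro power_strict_mono) auto
    also have "\<dots> = 2 * r\<^sup>2" by (simp add: power_mult_distrib)
    finally show ?thesis .
  qed
  have var: "(\<Sum>i\<in>{1..d}. (z i - zb)\<^sup>2) = S2 - n * zb\<^sup>2"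
  proof -
    have "(\<Sum>i\<in>{1..d}. (z i - zb)\<^sup>2) = (\<Sum>i\<in>{1..d}. (z i)\<^sup>2 - 2 * zb * z i + zb\<^sup>2)"
      by (intro sum.cong) (auto simp: power2_eq_square algebra_simps)
    also have "\<dots> = S2 - 2 * zb * Sz + n * zb\<^sup>2"
      by (simp add: sum.distrib sum_subtractf sum_distrib_left[symmetric] S2_def Sz_def n_def)
    also have "\<dots> = S2 - n * zb\<^sup>2" by (simp add: Szn power2_eq_square)
    finally show ?thesis .
  qed
  define V where "V = (S2 - n * zb\<^sup>2) / (n - 1)"
  have sV: "s = sqrt V" unfolding s_def V_def var n_def ..
  have S2u: "S2 < n * (1 + 5 * r)" using h3 by (simp add: S2_def n_def)
  have S2l: "S2 > n * (1 - 3 * r)"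
  proof -
    have e: "real d * (- (1 - 3 * r)) = - (real d * (1 - 3 * r))" by (simp only: mult_minus_right)
    have "- S2 < - (n * (1 - 3 * r))" using h4 unfolding S2_def n_def sum_negf e .
    then show ?thesis by linarith
  qed
  have up: "s \<le> 1 + 8 * r"
  proof -
    have "V \<le> S2 / (n - 1)" unfolding V_def using n by (intro divide_right_mono) auto
    also have "\<dots> \<le> n * (1 + 5 * r) / (n - 1)" using n S2u by (intro divide_right_mono) auto
    also have "\<dots> = (1 + 5 * r) * (n / (n - 1))" by simp
    also have "\<dots> \<le> (1 + 5 * r) * (1 + 2 * r\<^sup>2)"
    proof (intro mult_left_mono)
      have "n / (n - 1) = 1 + 1 / (n - 1)" using n by (simp add: field_simps)
      also have "1 / (n - 1) \<le> 2 / n" using n by (simp add: divide_simps)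
      finally have "n / (n - 1) \<le> 1 + 2 / n" by simp
      also have "2 / n \<le> 2 * r\<^sup>2" using dr by (simp add: n_def)
      finally show "n / (n - 1) \<le> 1 + 2 * r\<^sup>2" by simp
    qed (use r in auto)
    also have "\<dots> \<le> (1 + 8 * r)\<^sup>2"
    proof -
      have "r ^ 3 \<le> r\<^sup>2" using r by (simp add: power_decreasing)
      have "(1 + 5 * r) * (1 + 2 * r\<^sup>2) = 1 + 5 * r + 2 * r\<^sup>2 + 10 * r ^ 3"
        by (simp add: algebra_simps power2_eq_square power3_eq_cube)
      then have "(1 + 5 * r) * (1 + 2 * r\<^sup>2) \<le> 1 + 5 * r + 12 * r\<^sup>2"
        using \<open>r ^ 3 \<le> r\<^sup>2\<close> by linarith
      also have "\<dots> \<le> (1 + 8 * r)\<^sup>2" using r by (simp add: power2_eq_square algebra_simps)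
      finally show ?thesis .
    qed
    finally have "V \<le> (1 + 8 * r)\<^sup>2" .
    then have "sqrt V \<le> sqrt ((1 + 8 * r)\<^sup>2)" by (rule real_sqrt_le_mono)
    then show ?thesis using r by (simp add: sV)
  qed
  have lo: "1 - 8 * r \<le> s"
  proof (cases "1 - 5 * r \<le> 0")
    case True
    moreover have "0 \<le> s" unfolding s_def using d by (intro real_sqrt_ge_zero divide_nonneg_nonneg sum_nonneg) auto
    ultimately show ?thesis using r by linarith
  next
    case False
    have num: "S2 - n * zb\<^sup>2 > n * (1 - 5 * r)"
    proof -
      have "n * zb\<^sup>2 \<le> n * (2 * r\<^sup>2)" using zb2 n by simp
      moreover have "n * r\<^sup>2 \<le> n * r" using r n by (simp add: power2_eq_square)
      ultimately show ?thesis using S2l by (simp add: algebra_simps)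
    qed
    have lt: "1 - 5 * r < (S2 - n * zb\<^sup>2) / n" using num n by (simp add: field_simps)
    have "0 < n * (1 - 5 * r)" using n False by simp
    then have nn: "0 \<le> S2 - n * zb\<^sup>2" using num by linarith
    have Vge: "(S2 - n * zb\<^sup>2) / n \<le> V" unfolding V_def using nn n
      by (intro divide_left_mono) (auto intro: mult_pos_pos)
    have V1: "1 - 5 * r < V" using lt Vge by linarith
    have "1 - 5 * r = sqrt ((1 - 5 * r)\<^sup>2)" using False by simp
    also have "\<dots> \<le> sqrt (1 - 5 * r)"
    proof -
      have "(1 - 5 * r)\<^sup>2 \<le> 1 - 5 * r" using False r by (simp add: power2_eq_square mult_le_cancel_left1)
      then show ?thesis by (rule real_sqrt_le_mono)
    qed
    also have "\<dots> \<le> sqrt V" using V1 by simp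
    finally show ?thesis using r sV by simp
  qed
  show "\<bar>s - 1\<bar> \<le> 8 * r" using up lo by linarith
qed




lemma card_split:
  fixes P :: "nat \<Rightarrow> bool"
  shows "card {i\<in>{1..d}. P i} + card {i\<in>{1..d}. \<not> P i} = d"
proof -
  have "{i\<in>{1..d}. P i} \<union> {i\<in>{1..d}. \<not> P i} = {1..d}" by auto
  moreover have "{i\<in>{1..d}. P i} \<inter> {i\<in>{1..d}. \<not> P i} = {}" by auto
  ultimately show ?thesis using card_Un_disjoint[of "{i\<in>{1..d}. P i}" "{i\<in>{1..d}. \<not> P i}"] by simp
qed

lemma det_count:
  fixes z :: "nat \<Rightarrow> real" and d k :: nat and r q zb s \<epsilon> B :: real
  assumes d: "d > 0" and r: "0 < r"
    and zb: "\<bar>zb\<bar> \<le> sqrt 2 * r" and s: "\<bar>s - 1\<bar> \<le> 8 * r"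
    and Tq: "Tf q = real k / real d"
    and eps: "\<epsilon> = sqrt 2 * r + 8 * r * \<bar>q\<bar>"
    and h5: "real (card {i\<in>{1..d}. q - \<epsilon> < z i}) < real d * (Tf (q - \<epsilon>) + r / sqrt 2)"
    and h6: "real (card {i\<in>{1..d}. z i \<le> q + \<epsilon>}) < real d * ((1 - Tf (q + \<epsilon>)) + r / sqrt 2)"
    and qB: "\<bar>q\<bar> \<le> B"
  shows "\<bar>real (card {i\<in>{1..d}. zb + s * q < z i}) - real k\<bar> / real d \<le> 4 * r * (1 + B)"
proof -
  define t where "t = zb + s * q"
  define C where "C = card {i\<in>{1..d}. t < z i}"
  define n where "n = real d"
  define p where "p = real k / real d"
  have n: "n > 0" using d by (simp add: n_def)
  have kp: "real k = n * p" using n by (simp add: p_def n_def)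
  have e0: "0 \<le> \<epsilon>" using eps r by simp
  have "\<bar>(s - 1) * q\<bar> \<le> 8 * r * \<bar>q\<bar>"
    unfolding abs_mult by (intro mult_right_mono s) simp
  then have tq: "\<bar>t - q\<bar> \<le> \<epsilon>" unfolding t_def eps using zb
    by (simp add: algebra_simps)
  have C1: "C \<le> card {i\<in>{1..d}. q - \<epsilon> < z i}"
    unfolding C_def using tq by (intro card_mono) auto
  have C2: "d - C \<le> card {i\<in>{1..d}. z i \<le> q + \<epsilon>}"
  proof -
    have "d - C = card {i\<in>{1..d}. \<not> t < z i}" using card_split[where P="\<lambda>i. t < z i" and d=d] unfolding C_def by linarith
    also have "\<dots> \<le> card {i\<in>{1..d}. z i \<le> q + \<epsilon>}" using tq by (intro card_mono) auto
    finally show ?thesis .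
  qed
  have Cd: "C \<le> d" unfolding C_def using card_split[where P="\<lambda>i. t < z i" and d=d] by linarith
  have T1: "Tf (q - \<epsilon>) \<le> p + \<epsilon> / 2" using Tf_lip[of "q - \<epsilon>" q] e0 Tq by (simp add: p_def)
  have T2: "Tf (q + \<epsilon>) \<ge> p - \<epsilon> / 2"
  proof -
    have "Tf q - Tf (q + \<epsilon>) \<le> \<epsilon> / 2" using Tf_lip[of q "q + \<epsilon>"] e0 by simp
    then show ?thesis using Tq unfolding p_def by linarith
  qed
  have b1: "r / sqrt 2 \<le> r"
  proof -
    have "r / sqrt 2 \<le> r / 1" using r by (intro divide_left_mono) auto
    then show ?thesis by simp
  qed
  have b2: "sqrt 2 * r / 2 \<le> r" using r sqrt2_less_2 by simp
  have up: "real C < n * (p + \<epsilon> / 2 + r / sqrt 2)"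
  proof -
    have "real C \<le> real (card {i\<in>{1..d}. q - \<epsilon> < z i})" using C1 by simp
    also have "\<dots> < n * (Tf (q - \<epsilon>) + r / sqrt 2)" using h5 by (simp add: n_def)
    also have "\<dots> \<le> n * (p + \<epsilon> / 2 + r / sqrt 2)" using T1 n by (intro mult_left_mono) auto
    finally show ?thesis .
  qed
  have lo: "n * (p - \<epsilon> / 2 - r / sqrt 2) < real C"
  proof -
    have "real (d - C) \<le> real (card {i\<in>{1..d}. z i \<le> q + \<epsilon>})" using C2 by (simp only: of_nat_le_iff)
    moreover have "real (d - C) = n - real C" using Cd unfolding n_def by (rule of_nat_diff)
    ultimately have "n - real C \<le> real (card {i\<in>{1..d}. z i \<le> q + \<epsilon>})" by simp
    also have "\<dots> < n * ((1 - Tf (q + \<epsilon>)) + r / sqrt 2)" using h6 by (simp add: n_def)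
    also have "\<dots> \<le> n * (1 - p + \<epsilon> / 2 + r / sqrt 2)" using T2 n by (intro mult_left_mono) auto
    finally have f1: "n - real C < n * (1 - p + \<epsilon> / 2 + r / sqrt 2)" .
    have eq: "n * (1 - p + \<epsilon> / 2 + r / sqrt 2) = n - n * (p - \<epsilon> / 2 - r / sqrt 2)" by (simp add: algebra_simps)
    have "n - real C < n - n * (p - \<epsilon> / 2 - r / sqrt 2)" using f1 unfolding eq .
    then show ?thesis by simp
  qed
  have "\<bar>real C - real k\<bar> \<le> n * (\<epsilon> / 2 + r / sqrt 2)"
  proof -
    have e1: "n * (p + \<epsilon> / 2 + r / sqrt 2) = n * p + n * (\<epsilon> / 2 + r / sqrt 2)" by (simp add: algebra_simps)
    have e2: "n * (p - \<epsilon> / 2 - r / sqrt 2) = n * p - n * (\<epsilon> / 2 + r / sqrt 2)" by (simp add: algebra_simps)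
    show ?thesis using up lo unfolding kp e1 e2 abs_le_iff by linarith
  qed
  also have "\<epsilon> / 2 + r / sqrt 2 \<le> 4 * r * (1 + B)"
  proof -
    have "\<epsilon> / 2 = sqrt 2 * r / 2 + 4 * r * \<bar>q\<bar>" using eps by simp
    moreover have "4 * r * \<bar>q\<bar> \<le> 4 * r * B" using qB r by simp
    moreover have "4 * r * (1 + B) = 4 * r + 4 * r * B" by (simp add: algebra_simps)
    ultimately show ?thesis using b1 b2 r by linarith
  qed
  finally have "\<bar>real C - real k\<bar> \<le> n * (4 * r * (1 + B))" using n by simp
  then have "\<bar>real C - real k\<bar> \<le> (4 * r * (1 + B)) * n" by (simp only: mult.commute)
  then have "\<bar>real C - real k\<bar> / n \<le> 4 * r * (1 + B)" by (simp only: pos_divide_le_eq[OF n])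
  then show ?thesis unfolding C_def t_def n_def .
qed




lemma qbound:
  assumes p: "0 < p" "p < 1"
  shows "\<bar>std_gauss_quantile (1 - p)\<bar> \<le> sqrt (- 2 * ln (min p (1 - p)))"
proof -
  define q where "q = std_gauss_quantile (1 - p)"
  have Tq: "Tf q = p" unfolding q_def by (rule quantile_Tf[OF p])
  define m where "m = min p (1 - p)"
  have m: "0 < m" "m \<le> p" "m \<le> 1 - p" using p by (auto simp: m_def)
  have key: "\<exists>w. m \<le> w \<and> w \<le> exp (- q\<^sup>2 / 2)"
  proof (cases "q \<ge> 0")
    case True
    have "{y. q < y} \<subseteq> {y. q\<^sup>2 \<le> q * y}"
      using True by (auto simp: power2_eq_square intro: mult_left_mono)
    then have "Tf q \<le> measure N01 {y. q\<^sup>2 \<le> q * y}"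
      unfolding Tf_def by (intro N.finite_measure_mono) auto
    then show ?thesis using N01_tail[of q] m Tq by (intro exI[of _ p]) auto
  next
    case False
    have "{..q} \<subseteq> {y. q\<^sup>2 \<le> q * y}"
      using False by (auto simp: power2_eq_square intro: mult_left_mono_neg)
    then have "cdf N01 q \<le> measure N01 {y. q\<^sup>2 \<le> q * y}"
      unfolding cdf_def by (intro N.finite_measure_mono) auto
    then show ?thesis using N01_tail[of q] m Tq cdf_Tf[of q] by (intro exI[of _ "1 - p"]) auto
  qed
  then have "m \<le> exp (- q\<^sup>2 / 2)" by auto
  then have "ln m \<le> ln (exp (- q\<^sup>2 / 2))" using m(1) by (subst ln_le_cancel_iff) auto
  then have "ln m \<le> - q\<^sup>2 / 2" by simp
  then have "q\<^sup>2 \<le> - 2 * ln m" by simp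
  then have "sqrt (q\<^sup>2) \<le> sqrt (- 2 * ln m)" by (rule real_sqrt_le_mono)
  then show ?thesis unfolding q_def m_def by simp
qed





lemma card_filter_sum:
  assumes "finite I"
  shows "real (card {i\<in>I. P i}) = (\<Sum>i\<in>I. if P i then 1 else 0 :: real)"
  unfolding real_of_card by (rule sum.inter_filter[OF assms])

lemma sum_ind_card:
  assumes "finite I"
  shows "(\<Sum>i\<in>I. indicator A (f i) :: real) = real (card {i\<in>I. f i \<in> A})"
  unfolding card_filter_sum[OF assms] by (simp add: indicator_def of_bool_def)

lemma chernoff_measure:
  fixes G :: "real measure" and g :: "real \<Rightarrow> real"
  assumes G: "prob_space G" and sG: "sets G = sets borel"
    and g: "g \<in> borel_measurable borel" and h: "0 \<le> h" and I: "finite I"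
    and bound: "(\<integral>\<^sup>+y. ennreal (exp (h * (g y - c))) \<partial>G) \<le> ennreal e" and e: "0 \<le> e"
    and ed: "e ^ card I = D"
  shows "measure (PiM I (\<lambda>_. G)) {x\<in>space (PiM I (\<lambda>_. G)). real (card I) * c \<le> (\<Sum>i\<in>I. g (x i))} \<le> D"
proof -
  interpret P: prob_space "PiM I (\<lambda>_. G)" by (rule prob_space_PiM) (use G in auto)
  have "emeasure (PiM I (\<lambda>_. G)) {x\<in>space (PiM I (\<lambda>_. G)). real (card I) * c \<le> (\<Sum>i\<in>I. g (x i))} \<le> ennreal D"
    using chernoff_sum[OF G sG g h I bound e] ed by simp
  moreover have "0 \<le> D" using e ed by auto
  ultimately show ?thesis by (simp add: P.emeasure_eq_measure ennreal_le_iff)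
qed

theorem theorem1:
  fixes d k :: nat and \<mu> \<sigma> \<delta> :: real
  assumes "d \<ge> 2" and "\<sigma> > 0"
    and "1 \<le> k" and "k \<le> d - 1"
    and "0 < \<delta>" and "\<delta> < 1"
    and "real d \<ge> max 2 (ln (6 / \<delta>))"
  defines "M \<equiv> PiM {1..d} (\<lambda>_. gauss_measure \<mu> \<sigma>)"
  shows "measure M {x \<in> space M.
           \<bar>real (card {i \<in> {1..d}. x i > theta d x k}) - real k\<bar> / real d
             \<le> 4 * sqrt (ln (6 / \<delta>) / real d)
               * (1 + sqrt (- 2 * ln (min (real k / real d) (1 - real k / real d))))}
         \<ge> 1 - \<delta>"
proof -
  note d = assms(1) and sig = assms(2) and k1 = assms(3) and k2 = assms(4)
    and del = assms(5,6) and dL = assms(7)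
  define G where "G = gauss_measure \<mu> \<sigma>"
  define I where "I = {1..d}"
  have I: "finite I" "card I = d" by (auto simp: I_def)
  have MG: "M = PiM I (\<lambda>_. G)" by (simp add: M_def G_def I_def)
  have Gp: "prob_space G" unfolding G_def by (rule gauss_prob[OF sig])
  have sG: "sets G = sets borel" by (simp add: G_def)
  interpret Mp: prob_space M unfolding MG by (rule prob_space_PiM) (use Gp in auto)
  define L where "L = ln (6 / \<delta>)"
  have L1: "1 \<le> L"
  proof -
    have "\<delta> * exp 1 \<le> 1 * 6" using del exp_le by (intro mult_mono) auto
    then have "exp 1 \<le> 6 / \<delta>" using del by (simp add: field_simps)
    then show ?thesis unfolding L_def using del by (subst ln_ge_iff) auto
  qed
  have Ld: "L \<le> real d" using dL by (simp add: L_def)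
  have dpos: "0 < real d" using d by simp
  define r where "r = sqrt (L / real d)"
  have r2: "r\<^sup>2 = L / real d" unfolding r_def using L1 dpos by simp
  have r0: "0 < r" unfolding r_def using L1 dpos by simp
  have r1: "r \<le> 1" unfolding r_def using Ld dpos by simp
  have dr: "1 / real d \<le> r\<^sup>2" unfolding r2 using L1 dpos by (simp add: divide_right_mono)
  have ed: "exp (- r\<^sup>2) ^ card I = \<delta> / 6"
  proof -
    have "exp (- r\<^sup>2) ^ card I = exp (real d * (- r\<^sup>2))" unfolding I(2) by (rule exp_of_nat_mult[symmetric])
    also have "real d * (- r\<^sup>2) = - L" using dpos by (simp add: r2)
    also have "exp (- L) = \<delta> / 6" using del by (simp add: L_def exp_minus)
    finally show ?thesis .
  qed
  define p where "p = real k / real d"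
  have p: "0 < p" "p < 1" using k1 k2 d by (auto simp: p_def field_simps)
  define q where "q = std_gauss_quantile (1 - p)"
  have Tq: "Tf q = p" unfolding q_def by (rule quantile_Tf[OF p])
  define B where "B = sqrt (- 2 * ln (min p (1 - p)))"
  have qB: "\<bar>q\<bar> \<le> B" unfolding q_def B_def by (rule qbound[OF p])
  define \<epsilon> where "\<epsilon> = sqrt 2 * r + 8 * r * \<bar>q\<bar>"
  define b where "b = r / sqrt 2"
  have b0: "0 \<le> b" using r0 by (simp add: b_def)
  have eb: "exp (- 2 * b\<^sup>2) = exp (- r\<^sup>2)" by (simp add: b_def power_divide)
  define A5 where "A5 = {y. \<mu> + \<sigma> * (q - \<epsilon>) < y}"
  define A6 where "A6 = {y. y \<le> \<mu> + \<sigma> * (q + \<epsilon>)}"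
  have A5m[measurable]: "A5 \<in> sets borel" by (simp add: A5_def)
  have A6m[measurable]: "A6 \<in> sets borel" by (simp add: A6_def)
  have mA5: "measure G A5 = Tf (q - \<epsilon>)" unfolding A5_def G_def by (rule G_Tf_gt[OF sig])
  have mA6: "measure G A6 = 1 - Tf (q + \<epsilon>)" unfolding A6_def G_def by (rule G_Tf_le[OF sig])
  define S1 where "S1 = {x\<in>space M. real (card I) * (sqrt 2 * r) \<le> (\<Sum>i\<in>I. (x i - \<mu>) / \<sigma>)}"
  define S2 where "S2 = {x\<in>space M. real (card I) * (sqrt 2 * r) \<le> (\<Sum>i\<in>I. - ((x i - \<mu>) / \<sigma>))}"
  define S3 where "S3 = {x\<in>space M. real (card I) * (1 + 5 * r) \<le> (\<Sum>i\<in>I. ((x i - \<mu>) / \<sigma>)\<^sup>2)}"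
  define S4 where "S4 = {x\<in>space M. real (card I) * (- (1 - 3 * r)) \<le> (\<Sum>i\<in>I. - (((x i - \<mu>) / \<sigma>)\<^sup>2))}"
  define S5 where "S5 = {x\<in>space M. real (card I) * (measure G A5 + b) \<le> (\<Sum>i\<in>I. indicator A5 (x i))}"
  define S6 where "S6 = {x\<in>space M. real (card I) * (measure G A6 + b) \<le> (\<Sum>i\<in>I. indicator A6 (x i))}"
  have m1: "measure M S1 \<le> \<delta> / 6"
  proof -
    have "(\<integral>\<^sup>+y. ennreal (exp (sqrt 2 * r * ((y - \<mu>) / \<sigma> - sqrt 2 * r))) \<partial>G) = ennreal (exp (- r\<^sup>2))"
      unfolding G_def using G_std[OF sig, where g="\<lambda>t. t" and h="sqrt 2 * r" and c="sqrt 2 * r" and m=\<mu>]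
        B_lin[of "sqrt 2 * r"] by (simp add: power_mult_distrib)
    then show ?thesis unfolding S1_def MG
      by (intro chernoff_measure[where h="sqrt 2 * r" and c="sqrt 2 * r" and g="\<lambda>y. (y - \<mu>) / \<sigma>" and e="exp (- r\<^sup>2)", OF Gp sG _ _ I(1) _ _ ed]) (use r0 in auto)
  qed
  have m2: "measure M S2 \<le> \<delta> / 6"
  proof -
    have "(\<integral>\<^sup>+y. ennreal (exp (sqrt 2 * r * (- ((y - \<mu>) / \<sigma>) - sqrt 2 * r))) \<partial>G) = ennreal (exp (- r\<^sup>2))"
      unfolding G_def using G_std[OF sig, where g="\<lambda>t. - t" and h="sqrt 2 * r" and c="sqrt 2 * r" and m=\<mu>]
        B_neg[of "sqrt 2 * r"] by (simp add: power_mult_distrib)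
    then show ?thesis unfolding S2_def MG
      by (intro chernoff_measure[where h="sqrt 2 * r" and c="sqrt 2 * r" and g="\<lambda>y. - ((y - \<mu>) / \<sigma>)" and e="exp (- r\<^sup>2)", OF Gp sG _ _ I(1) _ _ ed]) (use r0 in auto)
  qed
  have m3: "measure M S3 \<le> \<delta> / 6"
  proof -
    have "(\<integral>\<^sup>+y. ennreal (exp (r / 4 * (((y - \<mu>) / \<sigma>)\<^sup>2 - (1 + 5 * r)))) \<partial>G) \<le> ennreal (exp (- r\<^sup>2))"
      unfolding G_def using G_std[OF sig, where g="\<lambda>t. t\<^sup>2" and h="r / 4" and c="1 + 5 * r" and m=\<mu>]
        B_sq[OF r0 r1] by simp
    then show ?thesis unfolding S3_def MG
      by (intro chernoff_measure[where h="r / 4" and c="1 + 5 * r" and g="\<lambda>y. ((y - \<mu>) / \<sigma>)\<^sup>2" and e="exp (- r\<^sup>2)", OF Gp sG _ _ I(1) _ _ ed]) (use r0 in auto)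
  qed
  have m4: "measure M S4 \<le> \<delta> / 6"
  proof -
    have "(\<integral>\<^sup>+y. ennreal (exp (r / 2 * (- (((y - \<mu>) / \<sigma>)\<^sup>2) - (- (1 - 3 * r))))) \<partial>G) \<le> ennreal (exp (- r\<^sup>2))"
      unfolding G_def using G_std[OF sig, where g="\<lambda>t. - (t\<^sup>2)" and h="r / 2" and c="- (1 - 3 * r)" and m=\<mu>]
        B_nsq[OF r0 r1] by simp
    then show ?thesis unfolding S4_def MG
      by (intro chernoff_measure[where h="r / 2" and c="- (1 - 3 * r)" and g="\<lambda>y. - (((y - \<mu>) / \<sigma>)\<^sup>2)" and e="exp (- r\<^sup>2)", OF Gp sG _ _ I(1) _ _ ed]) (use r0 in auto)
  qed
  have m5: "measure M S5 \<le> \<delta> / 6"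
  proof -
    have "(\<integral>\<^sup>+y. ennreal (exp (4 * b * (indicator A5 y - (measure G A5 + b)))) \<partial>G) \<le> ennreal (exp (- r\<^sup>2))"
      using B_ind[OF Gp _ b0, of A5] sG eb by simp
    then show ?thesis unfolding S5_def MG
      by (intro chernoff_measure[where h="4 * b" and c="measure G A5 + b" and g="indicator A5" and e="exp (- r\<^sup>2)", OF Gp sG _ _ I(1) _ _ ed]) (use b0 in auto)
  qed
  have m6: "measure M S6 \<le> \<delta> / 6"
  proof -
    have "(\<integral>\<^sup>+y. ennreal (exp (4 * b * (indicator A6 y - (measure G A6 + b)))) \<partial>G) \<le> ennreal (exp (- r\<^sup>2))"
      using B_ind[OF Gp _ b0, of A6] sG eb by simp
    then show ?thesis unfolding S6_def MG
      by (intro chernoff_measure[where h="4 * b" and c="measure G A6 + b" and g="indicator A6" and e="exp (- r\<^sup>2)", OF Gp sG _ _ I(1) _ _ ed]) (use b0 in auto)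
  qed
  define R where "R = 4 * sqrt (ln (6 / \<delta>) / real d) * (1 + sqrt (- 2 * ln (min (real k / real d) (1 - real k / real d))))"
  have R: "R = 4 * r * (1 + B)" by (simp add: R_def r_def L_def B_def p_def)
  define Good where "Good = {x \<in> space M. \<bar>real (card {i \<in> {1..d}. x i > theta d x k}) - real k\<bar> / real d \<le> R}"
  have S1m: "S1 \<in> sets M" unfolding S1_def MG G_def by measurable
  have S2m: "S2 \<in> sets M" unfolding S2_def MG G_def by measurable
  have S3m: "S3 \<in> sets M" unfolding S3_def MG G_def by measurable
  have S4m: "S4 \<in> sets M" unfolding S4_def MG G_def by measurable
  have S5m: "S5 \<in> sets M" unfolding S5_def MG G_def by measurable
  have S6m: "S6 \<in> sets M" unfolding S6_def MG G_def by measurable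
  have Goodm: "Good \<in> sets M"
  proof -
    have eq: "Good = {x \<in> space M. \<bar>(\<Sum>i\<in>{1..d}. if theta d x k < x i then 1 else 0) - real k\<bar> / real d \<le> R}"
      unfolding Good_def by (simp only: card_filter_sum[OF finite_atLeastAtMost])
    show ?thesis unfolding eq M_def theta_def vec_mean_def vec_std_def by measurable
  qed
  have sub: "space M - Good \<subseteq> S1 \<union> S2 \<union> S3 \<union> S4 \<union> S5 \<union> S6"
  proof
    fix x assume x: "x \<in> space M - Good"
    show "x \<in> S1 \<union> S2 \<union> S3 \<union> S4 \<union> S5 \<union> S6"
    proof (rule ccontr)
      assume nx: "x \<notin> S1 \<union> S2 \<union> S3 \<union> S4 \<union> S5 \<union> S6"
      have xs: "x \<in> space M" using x by simp
      define z where "z = (\<lambda>i. (x i - \<mu>) / \<sigma>)"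
      have xi: "x i = \<mu> + \<sigma> * z i" for i using sig by (simp add: z_def)
      have Id: "I = {1..d}" "card I = d" by (simp_all add: I_def)
      have h1: "(\<Sum>i\<in>{1..d}. z i) < real d * (sqrt 2 * r)"
        using nx xs unfolding S1_def z_def Id by auto
      have h2: "(\<Sum>i\<in>{1..d}. - z i) < real d * (sqrt 2 * r)"
        using nx xs unfolding S2_def z_def Id by auto
      have h3: "(\<Sum>i\<in>{1..d}. (z i)\<^sup>2) < real d * (1 + 5 * r)"
        using nx xs unfolding S3_def z_def Id by auto
      have h4: "(\<Sum>i\<in>{1..d}. - (z i)\<^sup>2) < real d * (- (1 - 3 * r))"
        using nx xs unfolding S4_def z_def Id by auto
      have a5: "x i \<in> A5 \<longleftrightarrow> q - \<epsilon> < z i" for i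
        unfolding A5_def using sig by (simp add: xi[of i] mult_less_cancel_left_pos)
      have a6: "x i \<in> A6 \<longleftrightarrow> z i \<le> q + \<epsilon>" for i
        unfolding A6_def using sig by (simp add: xi[of i] mult_le_cancel_left_pos)
      have c5: "{i\<in>I. x i \<in> A5} = {i\<in>{1..d}. q - \<epsilon> < z i}"
        unfolding Id a5 ..
      have c6: "{i\<in>I. x i \<in> A6} = {i\<in>{1..d}. z i \<le> q + \<epsilon>}"
        unfolding Id a6 ..
      have h5: "real (card {i\<in>{1..d}. q - \<epsilon> < z i}) < real d * (Tf (q - \<epsilon>) + r / sqrt 2)"
      proof -
        have "\<not> real (card I) * (measure G A5 + b) \<le> (\<Sum>i\<in>I. indicator A5 (x i))"
          using nx xs unfolding S5_def by auto
        moreover have "(\<Sum>i\<in>I. indicator A5 (x i)) = real (card {i\<in>I. x i \<in> A5})"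
          by (rule sum_ind_card[OF I(1)])
        ultimately show ?thesis unfolding c5 mA5 b_def Id(2) by simp
      qed
      have h6: "real (card {i\<in>{1..d}. z i \<le> q + \<epsilon>}) < real d * ((1 - Tf (q + \<epsilon>)) + r / sqrt 2)"
      proof -
        have "\<not> real (card I) * (measure G A6 + b) \<le> (\<Sum>i\<in>I. indicator A6 (x i))"
          using nx xs unfolding S6_def by auto
        moreover have "(\<Sum>i\<in>I. indicator A6 (x i)) = real (card {i\<in>I. x i \<in> A6})"
          by (rule sum_ind_card[OF I(1)])
        ultimately show ?thesis unfolding c6 mA6 b_def Id(2) by simp
      qed
      define zb where "zb = (\<Sum>i\<in>{1..d}. z i) / real d"
      define sd where "sd = sqrt ((\<Sum>i\<in>{1..d}. (z i - zb)\<^sup>2) / (real d - 1))"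
      have zbs1: "\<bar>zb\<bar> \<le> sqrt 2 * r"
        unfolding zb_def by (rule det_s(1)[OF d r0 r1 dr h1 h2 h3 h4])
      have zbs2: "\<bar>sd - 1\<bar> \<le> 8 * r"
        unfolding sd_def zb_def by (rule det_s(2)[OF d r0 r1 dr h1 h2 h3 h4])
      note zbs = zbs1 zbs2
      have cnt: "\<bar>real (card {i\<in>{1..d}. zb + sd * q < z i}) - real k\<bar> / real d \<le> 4 * r * (1 + B)"
        by (rule det_count[OF _ r0 zbs Tq[unfolded p_def] \<epsilon>_def h5 h6 qB]) (use d in auto)
      have vm: "vec_mean d x = \<mu> + \<sigma> * zb"
      proof -
        have "(\<Sum>i\<in>{1..d}. x i) = (\<Sum>i\<in>{1..d}. \<mu> + \<sigma> * z i)" by (simp add: xi[symmetric])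
        also have "\<dots> = real d * \<mu> + \<sigma> * (\<Sum>i\<in>{1..d}. z i)" by (simp add: sum.distrib sum_distrib_left)
        finally show ?thesis unfolding vec_mean_def zb_def using dpos by (simp add: field_simps)
      qed
      have vs: "vec_std d x = \<sigma> * sd"
      proof -
        have "(\<Sum>i\<in>{1..d}. (x i - vec_mean d x)\<^sup>2) = (\<Sum>i\<in>{1..d}. \<sigma>\<^sup>2 * (z i - zb)\<^sup>2)"
        proof (intro sum.cong refl)
          fix i
          have "x i - vec_mean d x = \<sigma> * (z i - zb)" by (simp add: xi vm algebra_simps)
          then show "(x i - vec_mean d x)\<^sup>2 = \<sigma>\<^sup>2 * (z i - zb)\<^sup>2" by (simp add: power_mult_distrib)
        qed
        also have "\<dots> = \<sigma>\<^sup>2 * (\<Sum>i\<in>{1..d}. (z i - zb)\<^sup>2)" by (simp add: sum_distrib_left)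
        finally have "vec_std d x = sqrt (\<sigma>\<^sup>2 * ((\<Sum>i\<in>{1..d}. (z i - zb)\<^sup>2) / (real d - 1)))"
          unfolding vec_std_def by simp
        also have "\<dots> = \<sigma> * sd" unfolding sd_def real_sqrt_mult using sig by simp
        finally show ?thesis .
      qed
      have th: "theta d x k = \<mu> + \<sigma> * (zb + sd * q)"
        unfolding theta_def vm vs q_def p_def by (simp add: algebra_simps)
      have ceq: "{i\<in>{1..d}. x i > theta d x k} = {i\<in>{1..d}. zb + sd * q < z i}"
      proof -
        have "theta d x k < x i \<longleftrightarrow> zb + sd * q < z i" for i
          unfolding th using sig by (simp add: xi mult_less_cancel_left_pos)
        then show ?thesis by simp
      qed
      have "\<bar>real (card {i\<in>{1..d}. x i > theta d x k}) - real k\<bar> / real d \<le> R"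
        unfolding ceq R by (rule cnt)
      then have "x \<in> Good" using xs unfolding Good_def by blast
      then show False using x by simp
    qed
  qed
  have "measure M (space M - Good) \<le> measure M (S1 \<union> S2 \<union> S3 \<union> S4 \<union> S5 \<union> S6)"
    using sub S1m S2m S3m S4m S5m S6m by (intro Mp.finite_measure_mono) auto
  also have "\<dots> \<le> measure M S1 + measure M S2 + measure M S3 + measure M S4 + measure M S5 + measure M S6"
  proof -
    have u: "measure M (A \<union> B) \<le> measure M A + measure M B" if "A \<in> sets M" "B \<in> sets M" for A B
      using measure_Un_le[OF that] .
    have "measure M (S1 \<union> S2 \<union> S3 \<union> S4 \<union> S5 \<union> S6) \<le> measure M (S1 \<union> S2 \<union> S3 \<union> S4 \<union> S5) + measure M S6"
      using S1m S2m S3m S4m S5m S6m by (intro u) auto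
    moreover have "measure M (S1 \<union> S2 \<union> S3 \<union> S4 \<union> S5) \<le> measure M (S1 \<union> S2 \<union> S3 \<union> S4) + measure M S5"
      using S1m S2m S3m S4m S5m by (intro u) auto
    moreover have "measure M (S1 \<union> S2 \<union> S3 \<union> S4) \<le> measure M (S1 \<union> S2 \<union> S3) + measure M S4"
      using S1m S2m S3m S4m by (intro u) auto
    moreover have "measure M (S1 \<union> S2 \<union> S3) \<le> measure M (S1 \<union> S2) + measure M S3"
      using S1m S2m S3m by (intro u) auto
    moreover have "measure M (S1 \<union> S2) \<le> measure M S1 + measure M S2"
      using S1m S2m by (intro u) auto
    ultimately show ?thesis by linarith
  qed
  also have "\<dots> \<le> \<delta>" using m1 m2 m3 m4 m5 m6 by linarith
  finally have "measure M (space M - Good) \<le> \<delta>" .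
  then have "1 - \<delta> \<le> measure M Good" using Mp.prob_compl[OF Goodm] by linarith
  then show ?thesis unfolding Good_def R_def .
qed


end
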